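(* Consider the VP forward SDE $\mathrm{d}\boldsymbol{x}_t=-\tfrac12\beta(t)\boldsymbol{x}_t\,\mathrm{d}t+\sqrt{\beta(t)}\,\mathrm{d}\boldsymbol{w}_t$ with $0\le\beta(t)\le\beta_{\max}<\infty$, $\alpha(t)=\exp(-\int_0^t\beta(s)\,\mathrm{d}s)$, started from a clean random variable $\boldsymbol{x}_0$ supported on a compact set $\mathcal{X}$ with $\sup_{\boldsymbol{x}\in\mathcal{X}}\|\boldsymbol{x}\|_2\le B_x$; let $p_t$ denote the law of $\boldsymbol{x}_t$. Suppose the score network satisfies $\mathbb{E}_{\boldsymbol{x}\sim p_t}\big[\|\nabla_{\boldsymbol{x}}\log p_t(\boldsymbol{x})-\boldsymbol{s}_{\boldsymbol{\theta}}(\boldsymbol{x},t)\|_2^2\big]\le\epsilon_s(t)^2$ for all $t$. Let $\hat{\boldsymbol{x}}_{0|t}=\frac{1}{\sqrt{\alpha(t)}}\big(\boldsymbol{x}_t+(1-\alpha(t))\boldsymbol{s}_{\boldsymbol{\theta}}(\boldsymbol{x}_t,t)\big)$. Then for every $t\in[0,T]$, $$\mathbb{E}\|\hat{\boldsymbol{x}}_{0|t}\|^2\le K(t)<\infty,\qquad K(t)=\Big(B_x+\frac{1-\alpha(t)}{\sqrt{\alpha(t)}}\epsilon_s(t)\Big)^2,$$ where the expectation is over $\boldsymbol{x}_t\sim p_t$. *)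

theory Defs
  imports "HOL-Probability.Probability"
begin

definition vp_alpha :: "(real \<Rightarrow> real) \<Rightarrow> real \<Rightarrow> real" where
  "vp_alpha \<beta> t = exp (- integral {0..t} \<beta>)"

definition std_gauss :: "'a::euclidean_space measure" where
  "std_gauss = density lborel
     (\<lambda>z. ennreal ((2 * pi) powr (- real DIM('a) / 2) * exp (- (norm z)\<^sup>2 / 2)))"

text \<open>Law p_t of x_t for the VP SDE dx = -1/2 beta x dt + sqrt beta dw started from x_0 ~ mu0:
  x_t has the same law as sqrt(alpha t) x_0 + sqrt(1 - alpha t) z, with z ~ N(0,I) independent of x_0.\<close>
definition vp_law :: "'a::euclidean_space measure \<Rightarrow> (real \<Rightarrow> real) \<Rightarrow> real \<Rightarrow> 'a measure" where
  "vp_law \<mu>0 \<beta> t = distr (\<mu>0 \<Otimes>\<^sub>M std_gauss) borel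
     (\<lambda>(y, z). sqrt (vp_alpha \<beta> t) *\<^sub>R y + sqrt (1 - vp_alpha \<beta> t) *\<^sub>R z)"

text \<open>The (smooth) Lebesgue density of p_t when alpha t < 1 (Gaussian convolution of mu0).\<close>
definition vp_density :: "'a::euclidean_space measure \<Rightarrow> (real \<Rightarrow> real) \<Rightarrow> real \<Rightarrow> 'a \<Rightarrow> real" where
  "vp_density \<mu>0 \<beta> t x = (\<integral> y. (2 * pi * (1 - vp_alpha \<beta> t)) powr (- real DIM('a) / 2)
       * exp (- (norm (x - sqrt (vp_alpha \<beta> t) *\<^sub>R y))\<^sup>2 / (2 * (1 - vp_alpha \<beta> t))) \<partial>\<mu>0)"

definition grad :: "('a::euclidean_space \<Rightarrow> real) \<Rightarrow> 'a \<Rightarrow> 'a" where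
  "grad f x = (SOME g. (f has_derivative (\<lambda>h. g \<bullet> h)) (at x))"

definition vp_score :: "'a::euclidean_space measure \<Rightarrow> (real \<Rightarrow> real) \<Rightarrow> real \<Rightarrow> 'a \<Rightarrow> 'a" where
  "vp_score \<mu>0 \<beta> t x = grad (\<lambda>y. ln (vp_density \<mu>0 \<beta> t y)) x"

definition tweedie_est :: "('a::euclidean_space \<Rightarrow> real \<Rightarrow> 'a) \<Rightarrow> (real \<Rightarrow> real) \<Rightarrow> real \<Rightarrow> 'a \<Rightarrow> 'a" where
  "tweedie_est s \<beta> t x = (1 / sqrt (vp_alpha \<beta> t)) *\<^sub>R (x + (1 - vp_alpha \<beta> t) *\<^sub>R s x t)"

end

theory Submission imports Defs begin


lemma std_gauss_prod:
  fixes z :: "'a::euclidean_space"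
  shows "(2 * pi) powr (- real DIM('a) / 2) * exp (- (norm z)\<^sup>2 / 2)
        = (\<Prod>b\<in>(Basis::'a set). std_normal_density (z \<bullet> b))"
proof -
  have n: "(norm z)\<^sup>2 = (\<Sum>b\<in>(Basis::'a set). (z \<bullet> b)\<^sup>2)"
  proof -
    have "(norm z)\<^sup>2 = z \<bullet> z" by (simp add: power2_norm_eq_inner)
    also have "\<dots> = (\<Sum>b\<in>(Basis::'a set). (z \<bullet> b)\<^sup>2)"
      by (subst euclidean_inner) (simp add: power2_eq_square)
    finally show ?thesis .
  qed
  have "exp (- (norm z)\<^sup>2 / 2) = (\<Prod>b\<in>(Basis::'a set). exp (- (z \<bullet> b)\<^sup>2 / 2))"
    unfolding n by (simp add: exp_sum[symmetric] sum_negf sum_divide_distrib)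
  moreover have "(2 * pi) powr (- real DIM('a) / 2) = (\<Prod>b\<in>(Basis::'a set). 1 / sqrt (2 * pi))"
  proof -
    have 1: "1 / sqrt (2*pi) = (2*pi) powr (-(1/2))"
    proof -
      have "(2*pi) powr (-(1/2)) = 1 / (2*pi) powr (1/2)" by (rule powr_minus_divide)
      also have "(2*pi) powr (1/2) = sqrt (2*pi)" by (rule powr_half_sqrt) simp
      finally show ?thesis by simp
    qed
    have 2: "((2*pi) powr (-(1/2))) ^ DIM('a) = (2*pi) powr (-(1/2) * real DIM('a))"
      by (subst powr_realpow[symmetric]) (simp_all add: powr_powr)
    have 3: "(-(1/2) * real DIM('a)) = - real DIM('a) / 2" by simp
    have "(\<Prod>b\<in>(Basis::'a set). 1 / sqrt (2 * pi)) = (1 / sqrt (2*pi)) ^ DIM('a)"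
      by (rule prod_constant)
    also have "\<dots> = (2 * pi) powr (- real DIM('a) / 2)" unfolding 1 2 3 ..
    finally show ?thesis by (rule sym)
  qed
  ultimately have "(2 * pi) powr (- real DIM('a) / 2) * exp (- (norm z)\<^sup>2 / 2)
      = (\<Prod>b\<in>(Basis::'a set). 1 / sqrt (2 * pi)) * (\<Prod>b\<in>(Basis::'a set). exp (- (z \<bullet> b)\<^sup>2 / 2))"
    by (simp only:)
  also have "\<dots> = (\<Prod>b\<in>(Basis::'a set). 1 / sqrt (2 * pi) * exp (- (z \<bullet> b)\<^sup>2 / 2))"
    by (rule prod.distrib[symmetric])
  also have "\<dots> = (\<Prod>b\<in>(Basis::'a set). std_normal_density (z \<bullet> b))"
    by (simp only: std_normal_density_def)
  finally show ?thesis .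
qed

lemma prob_space_std_gauss: "prob_space (std_gauss :: 'a::euclidean_space measure)"
proof
  have "emeasure (std_gauss :: 'a measure) (space std_gauss)
     = (\<integral>\<^sup>+ z. ennreal ((2 * pi) powr (- real DIM('a) / 2) * exp (- (norm z)\<^sup>2 / 2)) \<partial>(lborel::'a measure))"
    unfolding std_gauss_def by (simp add: emeasure_density)
  also have "\<dots> = (\<integral>\<^sup>+ z. (\<Prod>b\<in>(Basis::'a set). ennreal (std_normal_density (z \<bullet> b))) \<partial>(lborel::'a measure))"
    by (intro nn_integral_cong, subst std_gauss_prod) (simp add: prod_ennreal normal_density_nonneg)
  also have "\<dots> = (\<Prod>b\<in>(Basis::'a set). (\<integral>\<^sup>+x. ennreal (std_normal_density x) \<partial>lborel))"
    by (rule nn_integral_lborel_prod) auto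
  also have "(\<integral>\<^sup>+x. ennreal (std_normal_density x) \<partial>lborel) = 1"
    by (simp add: nn_integral_eq_integral normal_density_nonneg)
  finally show "emeasure (std_gauss :: 'a measure) (space std_gauss) = 1" by simp
qed



lemma exp_mult_bound: "0 \<le> s \<Longrightarrow> exp (- s) * s \<le> (1::real)"
proof -
  assume "0 \<le> s"
  have "s \<le> exp s" using exp_ge_add_one_self[of s] by linarith
  then show ?thesis by (simp add: exp_minus field_simps)
qed

lemma gauss_taylor:
  fixes u h :: "'a::real_inner" and v :: real
  assumes v: "0 < v"
  shows "abs (exp (-(norm (u + h))\<^sup>2 / (2* v)) - exp (-(norm u)\<^sup>2 / (2* v))
           - exp (-(norm u)\<^sup>2 / (2* v)) * (- (u \<bullet> h) / v)) \<le> 3 / v * (norm h)\<^sup>2"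
proof -
  define A where "A = u \<bullet> u"
  define B where "B = u \<bullet> h"
  define Q where "Q = h \<bullet> h"
  define g where "g = (\<lambda>t::real. exp (-(A + 2*t*B + t\<^sup>2*Q) / (2* v)))"
  define diff where "diff = (\<lambda>n::nat. \<lambda>t::real. if n = 0 then g t
      else if n = 1 then g t * (-(B + t*Q)/v) else g t * ((B + t*Q)\<^sup>2/v\<^sup>2 - Q/v))"
  have nrm: "(norm (u + t *\<^sub>R h))\<^sup>2 = A + 2*t*B + t\<^sup>2*Q" for t
    unfolding power2_norm_eq_inner by (simp add: A_def B_def Q_def inner_add_left inner_add_right
        inner_commute power2_eq_square algebra_simps)
  have d0: "DERIV (diff 0) t :> diff 1 t" for t
    unfolding diff_def g_def using v
    by (auto intro!: derivative_eq_intros simp: power2_eq_square field_simps)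
  have d1: "DERIV (diff 1) t :> diff 2 t" for t
    unfolding diff_def g_def using v
    by (auto intro!: derivative_eq_intros simp: power2_eq_square field_simps)
  have "\<exists>t. 0 < t \<and> t < 1 \<and> diff 0 1 = (\<Sum>m<2. diff m 0 / fact m * 1 ^ m) + diff 2 t / fact 2 * 1 ^ 2"
    by (rule Maclaurin[of 1 2 diff "diff 0"]) (use d0 d1 in \<open>auto simp: less_Suc_eq numeral_2_eq_2\<close>)
  then obtain t where t: "0 < t" "t < 1"
    and eq: "diff 0 1 = diff 0 0 + diff 1 0 + diff 2 t / 2"
    by (auto simp: numeral_2_eq_2)
  have Qn: "Q = (norm h)\<^sup>2" by (simp add: Q_def power2_norm_eq_inner)
  define r where "r = A + 2*t*B + t\<^sup>2*Q"
  have r0: "0 \<le> r" using nrm[of t] r_def by (metis zero_le_power2)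
  have CS: "(B + t*Q)\<^sup>2 \<le> r * Q"
  proof -
    have "B + t*Q = (u + t *\<^sub>R h) \<bullet> h" by (simp add: B_def Q_def inner_add_left)
    then have "\<bar>B + t*Q\<bar> \<le> norm (u + t *\<^sub>R h) * norm h"
      by (metis Cauchy_Schwarz_ineq2)
    then have "(B + t*Q)\<^sup>2 \<le> (norm (u + t *\<^sub>R h) * norm h)\<^sup>2"
      by (metis abs_ge_zero power2_abs power_mono)
    then show ?thesis using nrm[of t] by (simp add: r_def Qn power_mult_distrib)
  qed
  have gt: "g t = exp (- (r / (2* v)))" unfolding g_def r_def by (rule arg_cong[where f=exp]) (simp add: diff_divide_distrib add_divide_distrib)
  have g1: "g t \<le> 1" using r0 v by (simp add: gt)
  have gpos: "0 \<le> g t" by (simp add: g_def)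
  have Q0: "0 \<le> Q" by (simp add: Qn)
  have "g t * (B + t*Q)\<^sup>2 / v\<^sup>2 \<le> g t * (r * Q) / v\<^sup>2"
    using CS gpos by (simp add: divide_right_mono mult_left_mono)
  also have "\<dots> = (exp (- (r / (2* v))) * (r / (2* v))) * (2 * Q / v)"
    using v by (simp add: gt power2_eq_square field_simps)
  also have "\<dots> \<le> 1 * (2 * Q / v)"
    using r0 v Q0 by (intro mult_right_mono exp_mult_bound) auto
  finally have T1: "g t * (B + t*Q)\<^sup>2 / v\<^sup>2 \<le> 2 * Q / v" by simp
  have T2: "g t * (Q / v) \<le> Q / v" using g1 Q0 v gpos by (simp add: divide_right_mono mult_left_le_one_le)
  have "\<bar>diff 2 t\<bar> \<le> g t * (B + t*Q)\<^sup>2 / v\<^sup>2 + g t * (Q/v)"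
    using gpos v Q0 by (simp add: diff_def right_diff_distrib abs_le_iff)
  also have "\<dots> \<le> 3 * Q / v" proof -
    have "3*Q/v = 2*Q/v + Q/v" by (simp add: add_divide_distrib[symmetric])
    then show ?thesis using T1 T2 by linarith
  qed
  finally have D2: "\<bar>diff 2 t\<bar> \<le> 3 * Q / v" .
  have lhs: "exp (-(norm (u + h))\<^sup>2 / (2* v)) - exp (-(norm u)\<^sup>2 / (2* v))
           - exp (-(norm u)\<^sup>2 / (2* v)) * (- (u \<bullet> h) / v) = diff 2 t / 2"
  proof -
    have "diff 0 1 = exp (-(norm (u + h))\<^sup>2 / (2* v))"
      using nrm[of 1] by (simp add: diff_def g_def)
    moreover have "diff 0 0 = exp (-(norm u)\<^sup>2 / (2* v))"
      using nrm[of 0] by (simp add: diff_def g_def)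
    moreover have "diff 1 0 = exp (-(norm u)\<^sup>2 / (2* v)) * (- (u \<bullet> h) / v)"
      using nrm[of 0] by (simp add: diff_def g_def B_def)
    ultimately show ?thesis using eq by simp
  qed
  show ?thesis unfolding lhs using D2 v by (simp add: Qn field_simps) (smt (verit) zero_le_power2)
qed



lemma lim_absK:
  fixes K :: real
  shows "((\<lambda>h::'a::real_normed_vector. abs K * norm h) \<longlongrightarrow> 0) (at 0)"
proof -
  have n0: "((\<lambda>h::'a. norm h) \<longlongrightarrow> 0) (at 0)"
    using tendsto_norm_zero_iff[of "\<lambda>h::'a. h" "at 0"] tendsto_ident_at[of "0::'a" UNIV] by auto
  show ?thesis
    by (rule tendsto_mult_right_zero[OF n0])
qed

lemma quad_bound_has_derivative:
  fixes f :: "'a::real_normed_vector \<Rightarrow> real"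
  assumes "bounded_linear D" and "\<And>h. abs (f (x + h) - f x - D h) \<le> K * (norm h)\<^sup>2"
  shows "(f has_derivative D) (at x)"
  unfolding has_derivative_at
proof (intro conjI)
  show "bounded_linear D" by fact
  show "(\<lambda>h. norm (f (x + h) - f x - D h) / norm h) \<midarrow>0\<rightarrow> 0"
  proof (rule tendsto_sandwich[where f="\<lambda>_. 0" and h="\<lambda>h. abs K * norm h"])
    show "\<forall>\<^sub>F h in at 0. 0 \<le> norm (f (x + h) - f x - D h) / norm h" by simp
    show "\<forall>\<^sub>F h in at 0. norm (f (x + h) - f x - D h) / norm h \<le> abs K * norm h"
    proof (intro always_eventually allI)
      fix h :: 'a
      have KK: "K * norm h \<le> abs K * norm h" by (simp add: mult_right_mono)
      show "norm (f (x + h) - f x - D h) / norm h \<le> abs K * norm h"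
      proof (cases "h = 0")
        case True then show ?thesis by simp
      next
        case False
        then have "0 < norm h" by simp
        then have "norm (f (x + h) - f x - D h) / norm h \<le> K * norm h"
          using assms(2)[of h] by (simp add: divide_le_eq power2_eq_square mult.assoc)
        then show ?thesis using KK by linarith
      qed
    qed
    show "((\<lambda>_. 0::real) \<longlongrightarrow> 0) (at 0)" by simp
    have n0: "((\<lambda>h::'a. norm h) \<longlongrightarrow> 0) (at 0)"
      using tendsto_norm_zero_iff[of "\<lambda>h::'a. h" "at 0"] tendsto_ident_at[of "0::'a" UNIV] by auto
    show "((\<lambda>h. abs K * norm h) \<longlongrightarrow> 0) (at 0)"
      by (rule lim_absK)
  qed
qed

lemma int_diff3:
  fixes f g k :: "'b \<Rightarrow> real"
  assumes "integrable M f" "integrable M g" "integrable M k"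
  shows "(\<integral>y. f y - g y - k y \<partial>M) = integral\<^sup>L M f - integral\<^sup>L M g - integral\<^sup>L M k"
  using assms by simp

context
  fixes M :: "'a::euclidean_space measure" and a v C B :: real
  assumes M: "prob_space M" "sets M = sets borel" and AEB: "AE y in M. norm y \<le> B"
    and v: "0 < v" and C: "0 < C" and a: "0 \<le> a"
begin

interpretation P: prob_space M by (rule M(1))

lemma meas_M: "f \<in> borel_measurable borel \<Longrightarrow> f \<in> borel_measurable M"
  using measurable_cong_sets[OF M(2) refl] by blast

abbreviation kk where "kk x y \<equiv> C * exp (- (norm (x - a *\<^sub>R y))\<^sup>2 / (2 * v))"

lemma kk_meas: "(\<lambda>y. kk x y) \<in> borel_measurable M"
  by (rule meas_M) measurable

lemma kk_pos: "0 < kk x y" using C by simp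

lemma kk_le: "kk x y \<le> C"
proof -
  have "0 \<le> (norm (x - a *\<^sub>R y))\<^sup>2 / (2 * v)" using v by simp
  then have "exp (- (norm (x - a *\<^sub>R y))\<^sup>2 / (2 * v)) \<le> 1" by simp
  then show ?thesis using C by (simp add: mult_left_le)
qed

lemma kk_int: "integrable M (\<lambda>y. kk x y)"
proof (rule P.integrable_const_bound[where B=C])
  show "AE y in M. norm (kk x y) \<le> C"
  proof (rule AE_I2)
    fix y
    have "norm (kk x y) = kk x y" using kk_pos[of x y] by (simp only: real_norm_def abs_of_pos)
    then show "norm (kk x y) \<le> C" using kk_le[of x y] by simp
  qed
qed (rule kk_meas)

lemma rem_bound:
  "abs (kk (x + h) y - kk x y - (kk x y / v) * ((a *\<^sub>R y - x) \<bullet> h)) \<le> 3 * C / v * (norm h)\<^sup>2"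
proof -
  define u where "u = x - a *\<^sub>R y"
  have e: "x + h - a *\<^sub>R y = u + h" by (simp add: u_def algebra_simps)
  have i: "(a *\<^sub>R y - x) \<bullet> h = - (u \<bullet> h)" by (simp add: u_def inner_diff_left)
  have "kk (x + h) y - kk x y - (kk x y / v) * ((a *\<^sub>R y - x) \<bullet> h)
     = C * (exp (-(norm (u + h))\<^sup>2 / (2 * v)) - exp (-(norm u)\<^sup>2 / (2 * v))
           - exp (-(norm u)\<^sup>2 / (2 * v)) * (- (u \<bullet> h) / v))"
    unfolding e i by (simp add: u_def algebra_simps)
  also have "abs \<dots> = C * abs (exp (-(norm (u + h))\<^sup>2 / (2 * v)) - exp (-(norm u)\<^sup>2 / (2 * v))
           - exp (-(norm u)\<^sup>2 / (2 * v)) * (- (u \<bullet> h) / v))"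
    using C by (simp add: abs_mult)
  also have "\<dots> \<le> C * (3 / v * (norm h)\<^sup>2)"
    using C by (intro mult_left_mono gauss_taylor v) auto
  also have "C * (3 / v * (norm h)\<^sup>2) = 3 * C / v * (norm h)\<^sup>2" by simp
  finally show ?thesis .
qed

lemma gd_int: "integrable M (\<lambda>y. (kk x y / v) *\<^sub>R (a *\<^sub>R y - x))"
proof (rule P.integrable_const_bound[where B="C / v * (a * B + norm x)"])
  show "AE y in M. norm ((kk x y / v) *\<^sub>R (a *\<^sub>R y - x)) \<le> C / v * (a * B + norm x)"
    using AEB proof eventually_elim
    case (elim y)
    have "norm ((kk x y / v) *\<^sub>R (a *\<^sub>R y - x)) = (kk x y / v) * norm (a *\<^sub>R y - x)"
      using kk_pos[of x y] v by simp
    also have "\<dots> \<le> (C / v) * (a * B + norm x)"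
    proof (intro mult_mono)
      show "kk x y / v \<le> C / v" using kk_le[of x y] v by (simp add: divide_right_mono)
      have "norm (a *\<^sub>R y - x) \<le> norm (a *\<^sub>R y) + norm x" by (rule norm_triangle_ineq4)
      also have "norm (a *\<^sub>R y) \<le> a * B" using a elim by (simp add: mult_left_mono)
      finally show "norm (a *\<^sub>R y - x) \<le> a * B + norm x" by simp
    qed (use C v in auto)
    finally show ?case .
  qed
  show "(\<lambda>y. (kk x y / v) *\<^sub>R (a *\<^sub>R y - x)) \<in> borel_measurable M"
    by (intro meas_M) measurable
qed

lemma P_deriv:
  "((\<lambda>x. \<integral>y. kk x y \<partial>M) has_derivative
     (\<lambda>h. (\<integral>y. (kk x y / v) *\<^sub>R (a *\<^sub>R y - x) \<partial>M) \<bullet> h)) (at x)"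
proof (rule quad_bound_has_derivative[where K="3 * C / v"])
  show "bounded_linear (\<lambda>h. (\<integral>y. (kk x y / v) *\<^sub>R (a *\<^sub>R y - x) \<partial>M) \<bullet> h)"
    by (rule bounded_linear_inner_right)
  fix h :: 'a
  have i2: "integrable M (\<lambda>y. (kk x y / v) * ((a *\<^sub>R y - x) \<bullet> h))"
    using integrable_inner_left[OF gd_int[of x], of h] by (simp only: inner_scaleR_left)
  have i1: "integrable M (\<lambda>y. kk (x + h) y - kk x y)"
    by (rule Bochner_Integration.integrable_diff[OF kk_int[of "x + h"] kk_int[of x]])
  have i3: "integrable M (\<lambda>y. kk (x + h) y - kk x y - (kk x y / v) * ((a *\<^sub>R y - x) \<bullet> h))"
    by (rule Bochner_Integration.integrable_diff[OF i1 i2])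
  have 1: "(\<integral>y. (kk x y / v) *\<^sub>R (a *\<^sub>R y - x) \<partial>M) \<bullet> h = (\<integral>y. (kk x y / v) * ((a *\<^sub>R y - x) \<bullet> h) \<partial>M)"
  proof -
    have "(\<integral>y. (kk x y / v) *\<^sub>R (a *\<^sub>R y - x) \<partial>M) \<bullet> h = (\<integral>y. ((kk x y / v) *\<^sub>R (a *\<^sub>R y - x)) \<bullet> h \<partial>M)"
      by (rule integral_inner_left[symmetric], rule gd_int)
    also have "\<dots> = (\<integral>y. (kk x y / v) * ((a *\<^sub>R y - x) \<bullet> h) \<partial>M)" by (simp only: inner_scaleR_left)
    finally show ?thesis .
  qed
  have eq: "(\<integral>y. kk (x + h) y \<partial>M) - (\<integral>y. kk x y \<partial>M) - (\<integral>y. (kk x y / v) *\<^sub>R (a *\<^sub>R y - x) \<partial>M) \<bullet> h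
      = (\<integral>y. kk (x + h) y - kk x y - (kk x y / v) * ((a *\<^sub>R y - x) \<bullet> h) \<partial>M)"
    unfolding 1 using int_diff3[OF kk_int[of "x + h"] kk_int[of x] i2] by (rule sym)
  have nb: "abs (\<integral>y. kk (x + h) y - kk x y - (kk x y / v) * ((a *\<^sub>R y - x) \<bullet> h) \<partial>M)
      \<le> (\<integral>y. abs (kk (x + h) y - kk x y - (kk x y / v) * ((a *\<^sub>R y - x) \<bullet> h)) \<partial>M)"
    using integral_norm_bound[of M "\<lambda>y. kk (x + h) y - kk x y - (kk x y / v) * ((a *\<^sub>R y - x) \<bullet> h)"]
    unfolding real_norm_def .
  have mb: "(\<integral>y. abs (kk (x + h) y - kk x y - (kk x y / v) * ((a *\<^sub>R y - x) \<bullet> h)) \<partial>M)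
      \<le> (\<integral>y. 3 * C / v * (norm h)\<^sup>2 \<partial>M)"
    by (rule Bochner_Integration.integral_mono[OF integrable_abs[OF i3] P.integrable_const rem_bound])
  have cb: "(\<integral>y. 3 * C / v * (norm h)\<^sup>2 \<partial>M) = 3 * C / v * (norm h)\<^sup>2"
    by (simp only: lebesgue_integral_const P.prob_space scaleR_one)
  show "abs ((\<integral>y. kk (x + h) y \<partial>M) - (\<integral>y. kk x y \<partial>M) - (\<integral>y. (kk x y / v) *\<^sub>R (a *\<^sub>R y - x) \<partial>M) \<bullet> h)
     \<le> 3 * C / v * (norm h)\<^sup>2"
    unfolding eq using nb mb cb by linarith
qed


lemma PP_pos: "0 < (\<integral>y. kk x y \<partial>M)"
proof -
  have nn: "AE y in M. 0 \<le> kk x y" by (rule AE_I2) (rule less_imp_le[OF kk_pos])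
  have ge: "0 \<le> (\<integral>y. kk x y \<partial>M)" by (rule integral_nonneg_AE[OF nn])
  have ne: "(\<integral>y. kk x y \<partial>M) \<noteq> 0"
  proof
    assume "(\<integral>y. kk x y \<partial>M) = 0"
    then have "AE y in M. kk x y = 0" using integral_nonneg_eq_0_iff_AE[OF kk_int nn] by blast
    then have "AE y in M. False" by eventually_elim (use kk_pos in force)
    then show False using P.AE_False by blast
  qed
  show ?thesis using ge ne by linarith
qed

lemma lnP_deriv:
  "((\<lambda>x. ln (\<integral>y. kk x y \<partial>M)) has_derivative
     (\<lambda>h. ((1 / (\<integral>y. kk x y \<partial>M)) *\<^sub>R (\<integral>y. (kk x y / v) *\<^sub>R (a *\<^sub>R y - x) \<partial>M)) \<bullet> h)) (at x)"
proof (rule has_derivative_eq_rhs)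
  show "((\<lambda>x. ln (\<integral>y. kk x y \<partial>M)) has_derivative
     (\<lambda>h. (\<integral>y. (kk x y / v) *\<^sub>R (a *\<^sub>R y - x) \<partial>M) \<bullet> h * inverse (\<integral>y. kk x y \<partial>M))) (at x)"
    by (rule DERIV_compose_FDERIV[OF DERIV_ln[OF PP_pos] P_deriv])
  show "(\<lambda>h. (\<integral>y. (kk x y / v) *\<^sub>R (a *\<^sub>R y - x) \<partial>M) \<bullet> h * inverse (\<integral>y. kk x y \<partial>M))
     = (\<lambda>h. ((1 / (\<integral>y. kk x y \<partial>M)) *\<^sub>R (\<integral>y. (kk x y / v) *\<^sub>R (a *\<^sub>R y - x) \<partial>M)) \<bullet> h)"
    by (rule ext) (simp only: inner_scaleR_left divide_inverse mult_1 mult.commute)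
qed

lemma grad_unique:
  fixes F :: "'a \<Rightarrow> real"
  assumes "(F has_derivative (\<lambda>h. G \<bullet> h)) (at x)"
  shows "grad F x = G"
proof -
  have ex: "\<exists>g. (F has_derivative (\<lambda>h. g \<bullet> h)) (at x)" using assms by blast
  define g where "g = grad F x"
  have gd: "(F has_derivative (\<lambda>h. g \<bullet> h)) (at x)"
    unfolding g_def grad_def by (rule someI_ex[OF ex])
  have "(\<lambda>h. g \<bullet> h) = (\<lambda>h. G \<bullet> h)" by (rule has_derivative_unique[OF gd assms])
  then have "g \<bullet> (g - G) = G \<bullet> (g - G)" by (rule fun_cong)
  then have "(g - G) \<bullet> (g - G) = 0" by (simp add: inner_diff_left)
  then show ?thesis unfolding g_def[symmetric] by simp
qed

lemma grad_lnP:
  "grad (\<lambda>x. ln (\<integral>y. kk x y \<partial>M)) x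
     = (1 / (\<integral>y. kk x y \<partial>M)) *\<^sub>R (\<integral>y. (kk x y / v) *\<^sub>R (a *\<^sub>R y - x) \<partial>M)"
  by (rule grad_unique[OF lnP_deriv])

lemma ky_int: "integrable M (\<lambda>y. kk x y *\<^sub>R (a *\<^sub>R y))"
proof (rule P.integrable_const_bound[where B="C * (a * B)"])
  show "AE y in M. norm (kk x y *\<^sub>R (a *\<^sub>R y)) \<le> C * (a * B)"
    using AEB proof eventually_elim
    case (elim y)
    have "norm (kk x y *\<^sub>R (a *\<^sub>R y)) = kk x y * (a * norm y)"
      using kk_pos[of x y] a by simp
    also have "\<dots> \<le> C * (a * B)"
      using elim kk_le[of x y] kk_pos[of x y] a
      by (intro mult_mono mult_left_mono) auto
    finally show ?case .
  qed
  show "(\<lambda>y. kk x y *\<^sub>R (a *\<^sub>R y)) \<in> borel_measurable M"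
    by (intro meas_M) measurable
qed

lemma key_bound:
  "norm (x + v *\<^sub>R ((1 / (\<integral>y. kk x y \<partial>M)) *\<^sub>R (\<integral>y. (kk x y / v) *\<^sub>R (a *\<^sub>R y - x) \<partial>M))) \<le> a * B"
proof -
  define P where "P = (\<integral>y. kk x y \<partial>M)"
  define Y where "Y = (\<integral>y. kk x y *\<^sub>R (a *\<^sub>R y) \<partial>M)"
  have Ppos: "0 < P" unfolding P_def by (rule PP_pos)
  have kx: "integrable M (\<lambda>y. kk x y *\<^sub>R x)"
    using kk_int[of x] by (rule integrable_scaleR_left)
  have "v *\<^sub>R (\<integral>y. (kk x y / v) *\<^sub>R (a *\<^sub>R y - x) \<partial>M) = (\<integral>y. v *\<^sub>R ((kk x y / v) *\<^sub>R (a *\<^sub>R y - x)) \<partial>M)"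
    by (rule integral_scaleR_right[symmetric])
  also have "\<dots> = (\<integral>y. kk x y *\<^sub>R (a *\<^sub>R y) - kk x y *\<^sub>R x \<partial>M)"
    using v by (intro Bochner_Integration.integral_cong refl) (simp add: scaleR_diff_right)
  also have "\<dots> = Y - P *\<^sub>R x"
  proof -
    have s: "(\<integral>y. kk x y *\<^sub>R x \<partial>M) = P *\<^sub>R x" unfolding P_def by (rule integral_scaleR_left) (rule kk_int)
    show ?thesis unfolding Y_def s[symmetric] by (rule Bochner_Integration.integral_diff[OF ky_int kx])
  qed
  finally have vG: "v *\<^sub>R (\<integral>y. (kk x y / v) *\<^sub>R (a *\<^sub>R y - x) \<partial>M) = Y - P *\<^sub>R x" .
  have "x + v *\<^sub>R ((1 / P) *\<^sub>R (\<integral>y. (kk x y / v) *\<^sub>R (a *\<^sub>R y - x) \<partial>M)) = (1 / P) *\<^sub>R Y"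
  proof -
    have "x + v *\<^sub>R ((1 / P) *\<^sub>R (\<integral>y. (kk x y / v) *\<^sub>R (a *\<^sub>R y - x) \<partial>M))
        = x + (1 / P) *\<^sub>R (v *\<^sub>R (\<integral>y. (kk x y / v) *\<^sub>R (a *\<^sub>R y - x) \<partial>M))"
      by (simp only: scaleR_scaleR mult.commute)
    also have "\<dots> = x + (1 / P) *\<^sub>R (Y - P *\<^sub>R x)" by (simp only: vG)
    also have "\<dots> = (1 / P) *\<^sub>R Y" using Ppos by (simp add: scaleR_diff_right)
    finally show ?thesis .
  qed
  moreover have "norm Y \<le> a * B * P"
  proof -
    have "norm Y \<le> (\<integral>y. norm (kk x y *\<^sub>R (a *\<^sub>R y)) \<partial>M)"
      unfolding Y_def by (rule integral_norm_bound)
    also have "\<dots> \<le> (\<integral>y. a * B * kk x y \<partial>M)"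
    proof (rule integral_mono_AE)
      show "integrable M (\<lambda>y. norm (kk x y *\<^sub>R (a *\<^sub>R y)))" by (rule integrable_norm[OF ky_int])
      show "integrable M (\<lambda>y. a * B * kk x y)" by (rule integrable_mult_right[OF kk_int])
      show "AE y in M. norm (kk x y *\<^sub>R (a *\<^sub>R y)) \<le> a * B * kk x y"
        using AEB proof eventually_elim
        case (elim y)
        have "norm (kk x y *\<^sub>R (a *\<^sub>R y)) = kk x y * (a * norm y)"
          using kk_pos[of x y] a by simp
        also have "\<dots> \<le> kk x y * (a * B)"
          using elim kk_pos[of x y] a by (intro mult_left_mono) auto
        finally show ?case by (simp only: mult.commute mult.left_commute)
      qed
    qed
    also have "\<dots> = a * B * P" unfolding P_def by (rule integral_mult_right_zero)
    finally show ?thesis .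
  qed
  ultimately show ?thesis
    using Ppos unfolding P_def[symmetric] by (simp add: divide_le_eq mult.commute)
qed

lemma GG_meas: "(\<lambda>x. \<integral>y. (kk x y / v) *\<^sub>R (a *\<^sub>R y - x) \<partial>M) \<in> borel_measurable borel"
proof -
  have "(\<lambda>(x, y). (kk x y / v) *\<^sub>R (a *\<^sub>R y - x)) \<in> borel_measurable (borel \<Otimes>\<^sub>M (borel :: 'a measure))"
    by measurable
  then have "(\<lambda>(x, y). (kk x y / v) *\<^sub>R (a *\<^sub>R y - x)) \<in> borel_measurable (borel \<Otimes>\<^sub>M M)"
    using measurable_cong_sets[OF sets_pair_measure_cong[OF refl M(2)] refl] by blast
  then show ?thesis by (rule P.borel_measurable_lebesgue_integral)
qed

lemma PP_meas: "(\<lambda>x. \<integral>y. kk x y \<partial>M) \<in> borel_measurable borel"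
proof (rule borel_measurable_continuous_onI)
  show "continuous_on UNIV (\<lambda>x. \<integral>y. kk x y \<partial>M)"
    using P_deriv has_derivative_continuous continuous_at_imp_continuous_on by blast
qed

end


lemma L2_bound:
  fixes N :: "'b measure" and f :: "'b \<Rightarrow> real"
  assumes N: "prob_space N" and fm: "f \<in> borel_measurable N" and f0: "\<And>x. 0 \<le> f x"
    and hyp: "(\<integral>\<^sup>+ x. ennreal ((f x)\<^sup>2) \<partial>N) \<le> ennreal (e\<^sup>2)"
    and e0: "0 \<le> e" and A0: "0 \<le> A" and c0: "0 \<le> c"
  shows "(\<integral>\<^sup>+ x. ennreal ((A + c * f x)\<^sup>2) \<partial>N) \<le> ennreal ((A + c * e)\<^sup>2)"
proof -
  interpret N: prob_space N by (rule N)
  have f2m: "(\<lambda>x. (f x)\<^sup>2) \<in> borel_measurable N" using fm by measurable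
  have fin: "(\<integral>\<^sup>+ x. ennreal ((f x)\<^sup>2) \<partial>N) < \<infinity>"
    using hyp by (simp add: le_less_trans)
  have i2: "integrable N (\<lambda>x. (f x)\<^sup>2)"
  proof (rule integrableI_bounded)
    show "(\<lambda>x. (f x)\<^sup>2) \<in> borel_measurable N" by (rule f2m)
    show "(\<integral>\<^sup>+ x. ennreal (norm ((f x)\<^sup>2)) \<partial>N) < \<infinity>" using fin by simp
  qed
  have i1: "integrable N f" by (rule N.square_integrable_imp_integrable[OF fm i2])
  define E where "E = (\<integral>x. (f x)\<^sup>2 \<partial>N)"
  define m where "m = (\<integral>x. f x \<partial>N)"
  have "ennreal E = (\<integral>\<^sup>+ x. ennreal ((f x)\<^sup>2) \<partial>N)"
    unfolding E_def by (rule nn_integral_eq_integral[symmetric, OF i2]) simp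
  then have "ennreal E \<le> ennreal (e\<^sup>2)" using hyp by simp
  then have Ee: "E \<le> e\<^sup>2" by (simp add: ennreal_le_iff)
  have E0: "0 \<le> E" unfolding E_def by simp
  have m0: "0 \<le> m" unfolding m_def using f0 by simp
  have "0 \<le> (\<integral>x. (f x - m)\<^sup>2 \<partial>N)" by simp
  also have "(\<integral>x. (f x - m)\<^sup>2 \<partial>N) = (\<integral>x. (f x)\<^sup>2 - 2 * m * f x + m\<^sup>2 \<partial>N)"
    by (rule Bochner_Integration.integral_cong) (simp_all add: power2_diff)
  also have "\<dots> = E - 2 * m * m + m\<^sup>2"
    using i1 i2 by (simp add: E_def m_def N.prob_space)
  finally have "m\<^sup>2 \<le> E" by (simp add: power2_eq_square)
  then have "m\<^sup>2 \<le> e\<^sup>2" using Ee by linarith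
  then have me: "m \<le> e" using e0 m0 by (simp add: power2_le_iff_abs_le)
  have iq: "integrable N (\<lambda>x. (A + c * f x)\<^sup>2)"
    using i1 i2 by (simp add: power2_sum power_mult_distrib)
  have "(\<integral>\<^sup>+ x. ennreal ((A + c * f x)\<^sup>2) \<partial>N) = ennreal (\<integral>x. (A + c * f x)\<^sup>2 \<partial>N)"
    by (rule nn_integral_eq_integral[OF iq]) simp
  also have "(\<integral>x. (A + c * f x)\<^sup>2 \<partial>N) = A\<^sup>2 + 2 * A * c * m + c\<^sup>2 * E"
    using i1 i2 by (simp add: power2_sum power_mult_distrib E_def m_def N.prob_space algebra_simps)
  also have "\<dots> \<le> (A + c * e)\<^sup>2"
  proof -
    have "2 * A * c * m \<le> 2 * A * c * e" using me A0 c0 by (simp add: mult_left_mono)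
    moreover have "c\<^sup>2 * E \<le> c\<^sup>2 * e\<^sup>2" using Ee by (simp add: mult_left_mono)
    ultimately show ?thesis by (simp add: power2_sum power_mult_distrib)
  qed
  finally show ?thesis by (simp add: ennreal_leI)
qed


theorem lemmaD10:
  fixes \<mu>0 :: "'a::euclidean_space measure"
    and \<beta> :: "real \<Rightarrow> real" and \<beta>max Bx T :: real
    and X :: "'a set"
    and s :: "'a \<Rightarrow> real \<Rightarrow> 'a"
    and \<epsilon> :: "real \<Rightarrow> real"
  assumes "\<beta> \<in> borel_measurable borel"
    and "\<And>t. 0 \<le> \<beta> t \<and> \<beta> t \<le> \<beta>max"
    and "prob_space \<mu>0" and "sets \<mu>0 = sets borel"
    and "compact X" and "AE x in \<mu>0. x \<in> X"
    and "\<forall>x\<in>X. norm x \<le> Bx"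
    and "\<And>t. (\<lambda>x. s x t) \<in> borel_measurable borel"
    and "\<And>t. 0 \<le> \<epsilon> t"
    and "\<And>t. t \<in> {0..T} \<Longrightarrow> vp_alpha \<beta> t < 1 \<Longrightarrow>
           (\<integral>\<^sup>+ x. ennreal ((norm (vp_score \<mu>0 \<beta> t x - s x t))\<^sup>2) \<partial>(vp_law \<mu>0 \<beta> t))
             \<le> ennreal ((\<epsilon> t)\<^sup>2)"
    and "t \<in> {0..T}"
  shows "(\<integral>\<^sup>+ x. ennreal ((norm (tweedie_est s \<beta> t x))\<^sup>2) \<partial>(vp_law \<mu>0 \<beta> t))
           \<le> ennreal ((Bx + (1 - vp_alpha \<beta> t) / sqrt (vp_alpha \<beta> t) * \<epsilon> t)\<^sup>2)"
proof -
  interpret P0: prob_space \<mu>0 by (rule assms(3))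
  define \<alpha> where "\<alpha> = vp_alpha \<beta> t"
  have \<alpha>_pos: "0 < \<alpha>" by (simp add: \<alpha>_def vp_alpha_def)
  have t0: "0 \<le> t" using assms(11) by simp
  have int0: "0 \<le> integral {0..t} \<beta>"
  proof (cases "\<beta> integrable_on {0..t}")
    case True then show ?thesis by (rule integral_nonneg) (use assms(2) in auto)
  next
    case False then show ?thesis by (simp add: not_integrable_integral)
  qed
  have \<alpha>_le: "\<alpha> \<le> 1" using int0 by (simp add: \<alpha>_def vp_alpha_def)
  have AEB: "AE y in \<mu>0. norm y \<le> Bx"
    using assms(6) by eventually_elim (use assms(7) in blast)
  have Bx0: "0 \<le> Bx"
  proof -
    have "X \<noteq> {}"
    proof
      assume "X = {}"
      then have "AE x in \<mu>0. False" using assms(6) by simp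
      then show False using P0.AE_False by blast
    qed
    then obtain x0 where "x0 \<in> X" by blast
    then have "norm x0 \<le> Bx" using assms(7) by blast
    then show ?thesis by (meson norm_ge_zero order.trans)
  qed
  have G: "prob_space (std_gauss :: 'a measure)" by (rule prob_space_std_gauss)
  have sG: "sets (std_gauss :: 'a measure) = sets borel" by (simp add: std_gauss_def)
  interpret PG: pair_prob_space \<mu>0 "std_gauss :: 'a measure"
    unfolding pair_prob_space_def pair_sigma_finite_def
    using assms(3) G by (auto intro: prob_space_imp_sigma_finite)
  have sP: "sets (\<mu>0 \<Otimes>\<^sub>M (std_gauss :: 'a measure)) = sets ((borel :: 'a measure) \<Otimes>\<^sub>M (borel :: 'a measure))"
    by (rule sets_pair_measure_cong[OF assms(4) sG])
  define \<phi> :: "'a \<times> 'a \<Rightarrow> 'a" where "\<phi> = (\<lambda>(y, z). sqrt \<alpha> *\<^sub>R y + sqrt (1 - \<alpha>) *\<^sub>R z)"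
  have \<phi>b: "\<phi> \<in> borel_measurable ((borel :: 'a measure) \<Otimes>\<^sub>M (borel :: 'a measure))"
    unfolding \<phi>_def by measurable
  have \<phi>m: "\<phi> \<in> borel_measurable (\<mu>0 \<Otimes>\<^sub>M (std_gauss :: 'a measure))"
    using \<phi>b measurable_cong_sets[OF sP refl] by blast
  have law: "vp_law \<mu>0 \<beta> t = distr (\<mu>0 \<Otimes>\<^sub>M std_gauss) borel \<phi>"
    by (simp add: vp_law_def \<phi>_def \<alpha>_def)
  have P\<nu>: "prob_space (vp_law \<mu>0 \<beta> t)" unfolding law by (rule PG.prob_space_distr[OF \<phi>m])
  have s\<nu>: "sets (vp_law \<mu>0 \<beta> t) = sets borel" unfolding law by simp
  show ?thesis
  proof (cases "\<alpha> = 1")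
    case True
    have tw: "tweedie_est s \<beta> t x = x" for x
      by (simp add: tweedie_est_def \<alpha>_def[symmetric] True)
    have "vp_law \<mu>0 \<beta> t = distr (\<mu>0 \<Otimes>\<^sub>M (std_gauss :: 'a measure)) \<mu>0 fst"
      unfolding law
    proof (rule Measure_Space.distr_cong[OF refl])
      show "sets (borel :: 'a measure) = sets \<mu>0" by (rule assms(4)[symmetric])
      fix p :: "'a \<times> 'a"
      show "\<phi> p = fst p" by (cases p) (simp add: \<phi>_def True)
    qed
    also have "\<dots> = \<mu>0" by (rule prob_space.distr_pair_fst[OF G])
    finally have L: "vp_law \<mu>0 \<beta> t = \<mu>0" .
    have "(\<integral>\<^sup>+ x. ennreal ((norm (tweedie_est s \<beta> t x))\<^sup>2) \<partial>(vp_law \<mu>0 \<beta> t))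
        = (\<integral>\<^sup>+ x. ennreal ((norm x)\<^sup>2) \<partial>\<mu>0)" unfolding L tw ..
    also have "\<dots> \<le> (\<integral>\<^sup>+ x. ennreal (Bx\<^sup>2) \<partial>\<mu>0)"
      using AEB by (intro nn_integral_mono_AE) (auto elim!: eventually_mono intro!: ennreal_leI power_mono)
    also have "\<dots> = ennreal (Bx\<^sup>2)" by (simp add: P0.emeasure_space_1)
    finally show ?thesis by (simp add: \<alpha>_def[symmetric] True)
  next
    case False
    then have \<alpha>1: "\<alpha> < 1" using \<alpha>_le by simp
    define a where "a = sqrt \<alpha>"
    define v where "v = 1 - \<alpha>"
    define C where "C = (2 * pi * (1 - \<alpha>)) powr (- real DIM('a) / 2)"
    have a0: "0 < a" using \<alpha>_pos by (simp add: a_def)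
    have v0: "0 < v" using \<alpha>1 by (simp add: v_def)
    have C0: "0 < C" using \<alpha>1 by (simp add: C_def)
    have dens: "vp_density \<mu>0 \<beta> t = (\<lambda>x. \<integral>y. C * exp (- (norm (x - a *\<^sub>R y))\<^sup>2 / (2 * v)) \<partial>\<mu>0)"
      by (rule ext) (simp only: vp_density_def a_def v_def C_def \<alpha>_def)
    define sc where "sc = (\<lambda>x. (1 / (\<integral>y. C * exp (- (norm (x - a *\<^sub>R y))\<^sup>2 / (2 * v)) \<partial>\<mu>0)) *\<^sub>R
        (\<integral>y. (C * exp (- (norm (x - a *\<^sub>R y))\<^sup>2 / (2 * v)) / v) *\<^sub>R (a *\<^sub>R y - x) \<partial>\<mu>0))"
    have sc_eq: "vp_score \<mu>0 \<beta> t = sc"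
    proof (rule ext)
      fix x
      show "vp_score \<mu>0 \<beta> t x = sc x"
        unfolding vp_score_def dens sc_def
        by (rule grad_lnP[OF assms(3) assms(4) AEB v0 C0 less_imp_le[OF a0]])
    qed
    have PPm: "(\<lambda>x. \<integral>y. C * exp (- (norm (x - a *\<^sub>R y))\<^sup>2 / (2 * v)) \<partial>\<mu>0) \<in> borel_measurable borel"
      by (rule PP_meas[OF assms(3) assms(4) AEB v0 C0 less_imp_le[OF a0]])
    have GGm: "(\<lambda>x. \<integral>y. (C * exp (- (norm (x - a *\<^sub>R y))\<^sup>2 / (2 * v)) / v) *\<^sub>R (a *\<^sub>R y - x) \<partial>\<mu>0) \<in> borel_measurable borel"
      by (rule GG_meas[OF assms(3) assms(4) AEB v0 C0 less_imp_le[OF a0]])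
    have scm: "sc \<in> borel_measurable borel"
      unfolding sc_def using PPm GGm by measurable
    define c where "c = v / a"
    have c0: "0 \<le> c" using a0 v0 by (simp add: c_def)
    have bound: "norm (tweedie_est s \<beta> t x) \<le> Bx + c * norm (sc x - s x t)" for x
    proof -
      have kb: "norm (x + v *\<^sub>R sc x) \<le> a * Bx"
        unfolding sc_def by (rule key_bound[OF assms(3) assms(4) AEB v0 C0 less_imp_le[OF a0]])
      have "tweedie_est s \<beta> t x = (1 / a) *\<^sub>R (x + v *\<^sub>R sc x) + (v / a) *\<^sub>R (s x t - sc x)"
        by (simp add: tweedie_est_def \<alpha>_def[symmetric] a_def[symmetric] v_def[symmetric] algebra_simps)
      then have "norm (tweedie_est s \<beta> t x) \<le> norm ((1 / a) *\<^sub>R (x + v *\<^sub>R sc x)) + norm ((v / a) *\<^sub>R (s x t - sc x))"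
        by (simp only: norm_triangle_ineq)
      also have "norm ((1 / a) *\<^sub>R (x + v *\<^sub>R sc x)) = (1 / a) * norm (x + v *\<^sub>R sc x)"
        using a0 by simp
      also have "\<dots> \<le> (1 / a) * (a * Bx)" by (rule mult_left_mono[OF kb]) (use a0 in simp)
      also have "(1 / a) * (a * Bx) = Bx" using a0 by simp
      also have "norm ((v / a) *\<^sub>R (s x t - sc x)) = c * norm (sc x - s x t)"
        using a0 v0 by (simp add: c_def norm_minus_commute)
      finally show ?thesis by simp
    qed
    have fm: "(\<lambda>x. norm (sc x - s x t)) \<in> borel_measurable (vp_law \<mu>0 \<beta> t)"
    proof -
      have "(\<lambda>x. norm (sc x - s x t)) \<in> borel_measurable borel"
        using scm assms(8)[of t] by measurable
      then show ?thesis using measurable_cong_sets[OF s\<nu> refl] by blast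
    qed
    have hyp: "(\<integral>\<^sup>+ x. ennreal ((norm (sc x - s x t))\<^sup>2) \<partial>(vp_law \<mu>0 \<beta> t)) \<le> ennreal ((\<epsilon> t)\<^sup>2)"
      using assms(10)[OF assms(11)] \<alpha>1 unfolding sc_eq \<alpha>_def by blast
    have "(\<integral>\<^sup>+ x. ennreal ((norm (tweedie_est s \<beta> t x))\<^sup>2) \<partial>(vp_law \<mu>0 \<beta> t))
        \<le> (\<integral>\<^sup>+ x. ennreal ((Bx + c * norm (sc x - s x t))\<^sup>2) \<partial>(vp_law \<mu>0 \<beta> t))"
      by (intro nn_integral_mono ennreal_leI power_mono bound norm_ge_zero)
    also have "\<dots> \<le> ennreal ((Bx + c * \<epsilon> t)\<^sup>2)"
      by (rule L2_bound[OF P\<nu> fm norm_ge_zero hyp assms(9) Bx0 c0])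
    also have "(Bx + c * \<epsilon> t) = (Bx + (1 - vp_alpha \<beta> t) / sqrt (vp_alpha \<beta> t) * \<epsilon> t)"
      by (simp add: c_def v_def a_def \<alpha>_def)
    finally show ?thesis .
  qed
qed

end
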